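(* Let $\lambda>0$, $\gamma>0$, and let $\beta_1=\beta_1(\gamma)$ be the unique positive solution of $\frac{\sqrt\pi}{2}\gamma x(1+x)^{1/2}(3+x)=1$. Let $h:[0,\lambda]\to\mathbb{R}$ be a bounded analytic function with $0\le h\le 1$, let $\eta\in[0,\lambda]$ and $b_1,b_2\in[0,\beta_1)$. Then $$\int_0^\eta\left|\frac{\exp\left(-2\int_0^x\frac{\xi}{1+b_1h(\xi)}d\xi\right)}{1+b_1h(x)}-\frac{\exp\left(-2\int_0^x\frac{\xi}{1+b_2h(\xi)}d\xi\right)}{1+b_2h(x)}\right|dx\le\frac{1}{2\gamma\beta_1}|b_1-b_2|.$$ *)

theory Defs
  imports "HOL-Analysis.Analysis"
begin

definition real_analytic_on :: "(real \<Rightarrow> real) \<Rightarrow> real set \<Rightarrow> bool" where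
  "real_analytic_on h S \<longleftrightarrow>
     (\<forall>x\<in>S. \<exists>r>0. \<exists>c::nat \<Rightarrow> real.
        \<forall>y\<in>S. \<bar>y - x\<bar> < r \<longrightarrow> (\<lambda>n. c n * (y - x) ^ n) sums h y)"

definition beta1 :: "real \<Rightarrow> real" where
  "beta1 \<gamma> = (THE x. x > 0 \<and> sqrt pi / 2 * \<gamma> * x * sqrt (1 + x) * (3 + x) = 1)"

end

theory Submission
  imports Defs "HOL-Probability.Distributions"
begin


lemma gauss_G:
  fixes a :: real
  shows "((\<lambda>t. (1 + a*t\<^sup>2) * exp(- t\<^sup>2)) has_integral (sqrt pi/2 + a*(sqrt pi/4))) {0..}"
proof -
  have m0: "has_bochner_integral lborel (\<lambda>x. indicator {0..} x *\<^sub>R exp (- x\<^sup>2)) (sqrt pi / 2)"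
    by (rule gaussian_moment_0)
  have m2: "has_bochner_integral lborel (\<lambda>x::real. indicator {0..} x *\<^sub>R (exp (-x\<^sup>2)*x^(2 * 1)))
       ((sqrt pi / 2) * (fact (2 * 1) / (2 ^ (2 * 1) * fact 1)))"
    by (rule gaussian_moment_even_pos)
  have m2': "has_bochner_integral lborel (\<lambda>x::real. a * (indicator {0..} x *\<^sub>R (exp (-x\<^sup>2)*x\<^sup>2)))
       (a * (sqrt pi / 4))"
    using has_bochner_integral_mult_right[OF m2, of a] by (simp add: fact_numeral)
  have s: "has_bochner_integral lborel (\<lambda>x::real. indicator {0..} x *\<^sub>R exp (- x\<^sup>2) + a * (indicator {0..} x *\<^sub>R (exp (-x\<^sup>2)*x\<^sup>2)))
       (sqrt pi/2 + a * (sqrt pi / 4))"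
    by (rule has_bochner_integral_add[OF m0 m2'])
  have e: "(\<lambda>x::real. indicator {0..} x *\<^sub>R exp (- x\<^sup>2) + a * (indicator {0..} x *\<^sub>R (exp (-x\<^sup>2)*x\<^sup>2)))
     = (\<lambda>x. if x \<in> {0..} then (1 + a*x\<^sup>2) * exp(- x\<^sup>2) else 0)"
    by (auto simp: fun_eq_iff indicator_def algebra_simps)
  have "((\<lambda>x::real. indicator {0..} x *\<^sub>R exp (- x\<^sup>2) + a * (indicator {0..} x *\<^sub>R (exp (-x\<^sup>2)*x\<^sup>2))) has_integral (sqrt pi/2 + a*(sqrt pi/4))) UNIV"
    using has_integral_integral_lborel[of "\<lambda>x::real. indicator {0..} x *\<^sub>R exp (- x\<^sup>2) + a * (indicator {0..} x *\<^sub>R (exp (-x\<^sup>2)*x\<^sup>2))"] s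
    unfolding has_bochner_integral_iff by auto
  then have "((\<lambda>x. if x \<in> {0..} then (1 + a*x\<^sup>2) * exp(- x\<^sup>2) else 0) has_integral (sqrt pi/2 + a*(sqrt pi/4))) UNIV"
    by (simp only: e)
  then show ?thesis by (simp only: has_integral_restrict_UNIV)
qed

lemma gauss_bound:
  fixes a T :: real assumes "a \<ge> 0" "T \<ge> 0"
  shows "integral {0..T} (\<lambda>t. (1 + a*t\<^sup>2) * exp(- t\<^sup>2)) \<le> sqrt pi/2 + a*(sqrt pi/4)"
proof -
  have "integral {0..T} (\<lambda>t. (1 + a*t\<^sup>2) * exp(- t\<^sup>2)) \<le> integral {0..} (\<lambda>t. (1 + a*t\<^sup>2) * exp(- t\<^sup>2))"
    apply (rule integral_subset_le)
    using gauss_G assms by (auto intro!: integrable_continuous_interval continuous_intros)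
  then show ?thesis using gauss_G[of a] by (simp add: integral_unique)
qed

lemma gauss_scaled:
  fixes a \<eta> :: real assumes "a > 0" "\<eta> \<ge> 0"
  shows "integral {0..\<eta>} (\<lambda>x. (1 + x\<^sup>2) * exp(- x\<^sup>2/a)) \<le> sqrt a * (sqrt pi/2 + a*(sqrt pi/4))"
proof -
  define G where "G = (\<lambda>t::real. (1 + a*t\<^sup>2) * exp(- t\<^sup>2))"
  define T where "T = \<eta> / sqrt a"
  have T0: "T \<ge> 0" using assms by (simp add: T_def)
  have hi: "(G has_integral integral {0..T} G) (cbox 0 T)"
    unfolding G_def by (auto intro!: integrable_integral integrable_continuous_interval continuous_intros)
  have sa: "sqrt a > 0" using assms by simp
  from has_integral_affinity'[OF hi, of "1/sqrt a" 0] sa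
  have "((\<lambda>x. G ((1/sqrt a) * x)) has_integral (sqrt a * integral {0..T} G)) (cbox 0 (sqrt a * T))"
    by simp
  moreover have "sqrt a * T = \<eta>" using sa by (simp add: T_def)
  moreover have "(\<lambda>x. G ((1/sqrt a) * x)) = (\<lambda>x. (1 + x\<^sup>2) * exp(- x\<^sup>2/a))"
    using assms by (auto simp: G_def fun_eq_iff power_divide)
  ultimately have "integral {0..\<eta>} (\<lambda>x. (1 + x\<^sup>2) * exp(- x\<^sup>2/a)) = sqrt a * integral {0..T} G"
    by (simp add: integral_unique)
  also have "\<dots> \<le> sqrt a * (sqrt pi/2 + a*(sqrt pi/4))"
    using gauss_bound[OF _ T0, of a] assms unfolding G_def by (intro mult_left_mono) auto
  finally show ?thesis .
qed

lemma analytic_cont: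
  assumes "real_analytic_on h {0..lam}" "lam > 0"
  shows "continuous_on {0..lam} h"
proof (rule continuous_on_eq_continuous_within[THEN iffD2], rule ballI)
  fix x assume x: "x \<in> {0..lam}"
  obtain r c where r: "r > 0" and c: "\<And>y. y \<in> {0..lam} \<Longrightarrow> \<bar>y - x\<bar> < r \<Longrightarrow> (\<lambda>n. c n * (y - x) ^ n) sums h y"
    using assms(1) x unfolding real_analytic_on_def by blast
  obtain y0 where y0: "y0 \<in> {0..lam}" "0 < \<bar>y0 - x\<bar>" "\<bar>y0 - x\<bar> < r"
  proof (cases "x < lam")
    case True
    show ?thesis by (rule that[of "x + min (r/2) (lam - x)"]) (use True x r in auto)
  next
    case False
    then have "x = lam" using x by auto
    show ?thesis by (rule that[of "x - min (r/2) lam"]) (use \<open>x = lam\<close> assms(2) r in auto)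
  qed
  define g where "g = (\<lambda>t. \<Sum>n. c n * t ^ n)"
  have "summable (\<lambda>n. c n * (y0 - x) ^ n)" using c[OF y0(1) y0(3)] by (simp add: sums_iff)
  then have "isCont g 0" unfolding g_def by (rule isCont_powser) (use y0 in auto)
  then have "isCont (\<lambda>y. g (y - x)) x"
    using continuous_at_compose[of x "\<lambda>y. y - x" g] by (auto simp: o_def intro!: continuous_intros)
  then have "continuous (at x within {0..lam}) (\<lambda>y. g (y - x))"
    using continuous_at_imp_continuous_at_within by blast
  then show "continuous (at x within {0..lam}) h"
  proof (rule continuous_transform_within[of _ _ _ "r"])
    fix y assume "y \<in> {0..lam}" "dist y x < r"
    then show "g (y - x) = h y" using c[of y] unfolding g_def dist_real_def by (simp add: sums_iff)
  qed (use r x in auto)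
qed

lemma beta1_prop:
  assumes "\<gamma> > 0"
  shows "beta1 \<gamma> > 0 \<and> sqrt pi / 2 * \<gamma> * beta1 \<gamma> * sqrt (1 + beta1 \<gamma>) * (3 + beta1 \<gamma>) = 1"
proof -
  define f where "f = (\<lambda>x. sqrt pi / 2 * \<gamma> * x * sqrt (1 + x) * (3 + x))"
  have mono: "f x < f y" if "0 < x" "x < y" for x y
  proof -
    have a: "sqrt pi / 2 * \<gamma> * x < sqrt pi / 2 * \<gamma> * y" using that assms by simp
    have b: "sqrt (1 + x) \<le> sqrt (1 + y)" using that by simp
    have c: "3 + x < 3 + y" using that by simp
    have d: "sqrt pi / 2 * \<gamma> * x * sqrt (1 + x) < sqrt pi / 2 * \<gamma> * y * sqrt (1 + y)"
    proof (rule mult_less_le_imp_less[OF a b])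
      show "0 \<le> sqrt pi / 2 * \<gamma> * x" using that assms by simp
      show "0 < sqrt (1 + x)" using that by simp
    qed
    have e: "0 < sqrt pi / 2 * \<gamma> * y * sqrt (1 + y)" using that assms by simp
    show ?thesis unfolding f_def using mult_strict_mono[OF d c e] that by simp
  qed
  have "\<exists>x. 0 \<le> x \<and> x \<le> 1/\<gamma> \<and> f x = 1"
  proof (rule IVT')
    show "f 0 \<le> 1" by (simp add: f_def)
    have p: "sqrt pi \<ge> 1" using pi_gt3 by simp
    have "sqrt (1 + 1/\<gamma>) \<ge> 1" using assms by simp
    moreover have "3 + 1/\<gamma> \<ge> 3" using assms by simp
    ultimately have "sqrt (1 + 1/\<gamma>) * (3 + 1/\<gamma>) \<ge> 1 * 3" by (intro mult_mono) auto
    then have "sqrt pi * (sqrt (1 + 1/\<gamma>) * (3 + 1/\<gamma>)) \<ge> 1 * 3" using p by (intro mult_mono) auto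
    then show "1 \<le> f (1/\<gamma>)" unfolding f_def using assms by (simp add: field_simps)
    show "0 \<le> 1/\<gamma>" using assms by simp
    show "continuous_on {0..1/\<gamma>} f" unfolding f_def by (auto intro!: continuous_intros)
  qed
  then obtain x0 where x0: "0 \<le> x0" "f x0 = 1" by blast
  have x0p: "x0 > 0" using x0 by (cases "x0 = 0") (auto simp: f_def)
  have "(THE x. x > 0 \<and> f x = 1) = x0"
  proof (rule the_equality)
    show "x0 > 0 \<and> f x0 = 1" using x0p x0 by simp
    fix y assume y: "y > 0 \<and> f y = 1"
    show "y = x0"
    proof (rule ccontr)
      assume "y \<noteq> x0"
      then have "y < x0 \<or> x0 < y" by auto
      then show False using mono[of y x0] mono[of x0 y] y x0 x0p by auto
    qed
  qed
  then have "beta1 \<gamma> = x0" unfolding beta1_def f_def by simp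
  then show ?thesis using x0 x0p by (simp add: f_def)
qed

lemma int_id: assumes "(x::real) \<ge> 0" shows "((\<lambda>\<xi>. \<xi>) has_integral x\<^sup>2/2) {0..x}"
proof -
  have "((\<lambda>\<xi>. \<xi>) has_integral (x\<^sup>2/2 - 0\<^sup>2/2)) {0..x}"
    by (rule fundamental_theorem_of_calculus[OF assms])
       (auto intro!: derivative_eq_intros simp: has_real_derivative_iff_has_vector_derivative[symmetric])
  then show ?thesis by simp
qed

lemma exp_diff:
  fixes u v m :: real assumes "m \<le> u" "m \<le> v"
  shows "\<bar>exp (- 2 * u) - exp (- 2 * v)\<bar> \<le> 2 * \<bar>u - v\<bar> * exp (- 2 * m)"
proof -
  have key: "exp (- 2 * p) - exp (- 2 * q) \<le> 2 * (q - p) * exp (- 2 * m)" if "m \<le> p" "p \<le> q" for p q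
  proof -
    have "exp (- 2 * p) - exp (- 2 * q) = exp (- 2 * p) * (1 - exp (- (2*(q-p))))"
      by (simp add: algebra_simps flip: exp_add)
    also have "\<dots> \<le> exp (- 2 * p) * (2*(q-p))"
    proof (rule mult_left_mono)
      show "1 - exp (- (2*(q-p))) \<le> 2*(q-p)" using exp_ge_add_one_self[of "- (2*(q-p))"] by linarith
    qed simp
    also have "\<dots> \<le> exp (- 2 * m) * (2*(q-p))"
      using that by (intro mult_right_mono) auto
    finally show ?thesis by (simp add: algebra_simps)
  qed
  show ?thesis
  proof (cases "u \<le> v")
    case True
    then show ?thesis using key[of u v] assms by (auto simp: abs_if)
  next
    case False
    then show ?thesis using key[of v u] assms by (auto simp: abs_if)
  qed
qed

lemma A_lower:
  fixes h :: "real \<Rightarrow> real"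
  assumes cont: "continuous_on {0..x} h" and hb: "\<And>\<xi>. \<xi> \<in> {0..x} \<Longrightarrow> 0 \<le> h \<xi> \<and> h \<xi> \<le> 1"
    and "x \<ge> 0" "b \<ge> 0" "b \<le> B"
  shows "x\<^sup>2 / (2*(1+B)) \<le> integral {0..x} (\<lambda>\<xi>. \<xi> / (1 + b * h \<xi>))"
proof -
  have pos: "1 + b * h \<xi> \<ge> 1" if "\<xi> \<in> {0..x}" for \<xi> using hb[OF that] assms by simp
  have "integral {0..x} (\<lambda>\<xi>. \<xi> / (1+B)) \<le> integral {0..x} (\<lambda>\<xi>. \<xi> / (1 + b * h \<xi>))"
  proof (rule integral_le)
    show "(\<lambda>\<xi>. \<xi> / (1 + b * h \<xi>)) integrable_on {0..x}"
    proof (rule integrable_continuous_interval, rule continuous_on_divide)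
      show "\<forall>\<xi>\<in>{0..x}. 1 + b * h \<xi> \<noteq> 0" using pos by fastforce
    qed (auto intro!: continuous_intros cont)
    show "(\<lambda>\<xi>. \<xi> / (1+B)) integrable_on {0..x}" using assms by (auto intro!: integrable_continuous_interval continuous_intros)
    fix \<xi> assume xi: "\<xi> \<in> {0..x}"
    have p1: "1 \<le> 1 + b * h \<xi>" using pos[OF xi] .
    have p2: "b * h \<xi> \<le> B" using hb[OF xi] assms mult_mono[of b B "h \<xi>" 1] by auto
    show "\<xi> / (1+B) \<le> \<xi> / (1 + b * h \<xi>)"
      using p1 p2 xi by (intro divide_left_mono) (auto intro!: mult_pos_pos)
  qed
  moreover have "integral {0..x} (\<lambda>\<xi>. \<xi> / (1+B)) = x\<^sup>2 / (2*(1+B))"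
    using integral_unique[OF has_integral_divide[OF int_id[OF assms(3)], of "1+B"]] by simp
  ultimately show ?thesis by simp
qed

lemma A_diff:
  fixes h :: "real \<Rightarrow> real"
  assumes cont: "continuous_on {0..x} h" and hb: "\<And>\<xi>. \<xi> \<in> {0..x} \<Longrightarrow> 0 \<le> h \<xi> \<and> h \<xi> \<le> 1"
    and "x \<ge> 0" "b1 \<ge> 0" "b2 \<ge> 0"
  shows "\<bar>integral {0..x} (\<lambda>\<xi>. \<xi> / (1 + b1 * h \<xi>)) - integral {0..x} (\<lambda>\<xi>. \<xi> / (1 + b2 * h \<xi>))\<bar>
     \<le> \<bar>b1 - b2\<bar> * (x\<^sup>2/2)"
proof -
  have pos: "1 + b * h \<xi> \<ge> 1" if "\<xi> \<in> {0..x}" "b \<ge> 0" for \<xi> b using hb[OF that(1)] that by simp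
  have i: "(\<lambda>\<xi>. \<xi> / (1 + b * h \<xi>)) integrable_on {0..x}" if "b \<ge> 0" for b
  proof (rule integrable_continuous_interval, rule continuous_on_divide)
    show "\<forall>\<xi>\<in>{0..x}. 1 + b * h \<xi> \<noteq> 0" using pos that by fastforce
  qed (auto intro!: continuous_intros cont)
  have "integral {0..x} (\<lambda>\<xi>. \<xi> / (1 + b1 * h \<xi>)) - integral {0..x} (\<lambda>\<xi>. \<xi> / (1 + b2 * h \<xi>))
      = integral {0..x} (\<lambda>\<xi>. \<xi> / (1 + b1 * h \<xi>) - \<xi> / (1 + b2 * h \<xi>))"
    using i assms by (simp add: integral_diff)
  also have "\<bar>\<dots>\<bar> \<le> integral {0..x} (\<lambda>\<xi>. \<bar>b1 - b2\<bar> * \<xi>)"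
  proof -
    have "norm (integral {0..x} (\<lambda>\<xi>. \<xi> / (1 + b1 * h \<xi>) - \<xi> / (1 + b2 * h \<xi>))) \<le> integral {0..x} (\<lambda>\<xi>. \<bar>b1 - b2\<bar> * \<xi>)"
    proof (rule integral_norm_bound_integral)
      show "(\<lambda>\<xi>. \<xi> / (1 + b1 * h \<xi>) - \<xi> / (1 + b2 * h \<xi>)) integrable_on {0..x}"
        using i assms by (intro integrable_diff) auto
      show "(\<lambda>\<xi>. \<bar>b1 - b2\<bar> * \<xi>) integrable_on {0..x}" by (auto intro!: integrable_continuous_interval continuous_intros)
      fix \<xi> assume xi: "\<xi> \<in> {0..x}"
      define D1 where "D1 = 1 + b1 * h \<xi>"
      define D2 where "D2 = 1 + b2 * h \<xi>"
      have D1: "D1 \<ge> 1" using pos[OF xi assms(4)] by (simp add: D1_def)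
      have D2: "D2 \<ge> 1" using pos[OF xi assms(5)] by (simp add: D2_def)
      have "\<xi> / D1 - \<xi> / D2 = \<xi> * (b2 - b1) * h \<xi> / (D1 * D2)"
        using D1 D2 by (simp add: field_simps D1_def D2_def)
      also have "\<bar>\<dots>\<bar> = \<xi> * \<bar>b1 - b2\<bar> * h \<xi> / (D1 * D2)"
        using xi hb[OF xi] D1 D2 by (simp add: abs_mult abs_minus_commute)
      also have "\<dots> \<le> \<xi> * \<bar>b1 - b2\<bar> * h \<xi>"
      proof -
        have "D1 * D2 \<ge> 1 * 1" using D1 D2 by (intro mult_mono) auto
        moreover have "0 \<le> \<xi> * \<bar>b1 - b2\<bar> * h \<xi>" using xi hb[OF xi] by simp
        ultimately show ?thesis by (simp add: divide_le_eq mult_le_cancel_left1 order_trans[OF _ mult_left_mono])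
      qed
      also have "\<dots> \<le> \<xi> * \<bar>b1 - b2\<bar> * 1"
        using xi hb[OF xi] by (intro mult_left_mono) auto
      finally show "norm (\<xi> / (1 + b1 * h \<xi>) - \<xi> / (1 + b2 * h \<xi>)) \<le> \<bar>b1 - b2\<bar> * \<xi>"
        by (simp add: D1_def D2_def mult.commute)
    qed
    then show ?thesis by simp
  qed
  also have "\<dots> = \<bar>b1 - b2\<bar> * (x\<^sup>2/2)"
    by (rule integral_unique[OF has_integral_mult_right[OF int_id[OF assms(3)]]])
  finally show ?thesis .
qed

lemma pointwise:
  fixes h :: "real \<Rightarrow> real"
  assumes cont: "continuous_on {0..x} h" and hb: "\<And>\<xi>. \<xi> \<in> {0..x} \<Longrightarrow> 0 \<le> h \<xi> \<and> h \<xi> \<le> 1"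
    and x: "x \<ge> 0" and b1: "0 \<le> b1" "b1 \<le> B" and b2: "0 \<le> b2" "b2 \<le> B"
  shows "\<bar>exp (-2 * integral {0..x} (\<lambda>\<xi>. \<xi> / (1 + b1 * h \<xi>))) / (1 + b1 * h x)
            - exp (-2 * integral {0..x} (\<lambda>\<xi>. \<xi> / (1 + b2 * h \<xi>))) / (1 + b2 * h x)\<bar>
         \<le> \<bar>b1 - b2\<bar> * ((1 + x\<^sup>2) * exp (- x\<^sup>2 / (1 + B)))"
proof -
  define A1 where "A1 = integral {0..x} (\<lambda>\<xi>. \<xi> / (1 + b1 * h \<xi>))"
  define A2 where "A2 = integral {0..x} (\<lambda>\<xi>. \<xi> / (1 + b2 * h \<xi>))"
  define D1 where "D1 = 1 + b1 * h x"
  define D2 where "D2 = 1 + b2 * h x"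
  define m where "m = x\<^sup>2 / (2*(1+B))"
  define E where "E = exp (- x\<^sup>2 / (1 + B))"
  define e1 where "e1 = exp (-2 * A1)"
  define e2 where "e2 = exp (-2 * A2)"
  have xx: "x \<in> {0..x}" using x by simp
  have hx: "0 \<le> h x" "h x \<le> 1" using hb[OF xx] by auto
  have D1: "D1 \<ge> 1" using hx b1 by (simp add: D1_def)
  have D2: "D2 \<ge> 1" using hx b2 by (simp add: D2_def)
  have B: "B \<ge> 0" using b1 by simp
  have mA1: "m \<le> A1" unfolding m_def A1_def by (rule A_lower[OF cont hb x b1]) auto
  have mA2: "m \<le> A2" unfolding m_def A2_def by (rule A_lower[OF cont hb x b2]) auto
  have Em: "exp (- 2 * m) = E" unfolding m_def E_def using B by (simp add: field_simps)
  have dA: "\<bar>A1 - A2\<bar> \<le> \<bar>b1 - b2\<bar> * (x\<^sup>2/2)"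
    unfolding A1_def A2_def by (rule A_diff[OF cont hb x b1(1) b2(1)]) auto
  have de: "\<bar>e1 - e2\<bar> \<le> \<bar>b1 - b2\<bar> * x\<^sup>2 * E"
  proof -
    have "\<bar>e1 - e2\<bar> \<le> 2 * \<bar>A1 - A2\<bar> * exp (- 2 * m)"
      unfolding e1_def e2_def by (rule exp_diff[OF mA1 mA2])
    also have "\<dots> \<le> 2 * (\<bar>b1 - b2\<bar> * (x\<^sup>2/2)) * E"
      unfolding Em using dA by (intro mult_right_mono) (auto simp: E_def)
    finally show ?thesis by simp
  qed
  have e2E: "e2 \<le> E" unfolding e2_def Em[symmetric] using mA2 by simp
  have e2p: "0 \<le> e2" unfolding e2_def by simp
  have split: "e1 / D1 - e2 / D2 = (e1 - e2) / D1 + e2 * (1/D1 - 1/D2)"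
    using D1 D2 by (simp add: field_simps)
  have t1: "\<bar>(e1 - e2) / D1\<bar> \<le> \<bar>b1 - b2\<bar> * x\<^sup>2 * E"
  proof -
    have "\<bar>(e1 - e2) / D1\<bar> = \<bar>e1 - e2\<bar> / D1" using D1 by simp
    also have "\<dots> \<le> \<bar>e1 - e2\<bar>" using D1 by (simp add: divide_le_eq mult_le_cancel_left1)
    finally show ?thesis using de by linarith
  qed
  have dD: "\<bar>1/D1 - 1/D2\<bar> \<le> \<bar>b1 - b2\<bar>"
  proof -
    have "1/D1 - 1/D2 = (b2 - b1) * h x / (D1 * D2)" using D1 D2 by (simp add: field_simps D1_def D2_def)
    then have "\<bar>1/D1 - 1/D2\<bar> = \<bar>b1 - b2\<bar> * h x / (D1 * D2)"
      using hx D1 D2 by (simp add: abs_mult abs_minus_commute)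
    also have "\<dots> \<le> \<bar>b1 - b2\<bar> * h x"
    proof -
      have "D1 * D2 \<ge> 1 * 1" using D1 D2 by (intro mult_mono) auto
      moreover have "0 \<le> \<bar>b1 - b2\<bar> * h x" using hx by simp
      ultimately show ?thesis by (simp add: divide_le_eq mult_le_cancel_left1)
    qed
    also have "\<dots> \<le> \<bar>b1 - b2\<bar>" using hx mult_left_mono[of "h x" 1 "\<bar>b1 - b2\<bar>"] by simp
    finally show ?thesis .
  qed
  have t2: "\<bar>e2 * (1/D1 - 1/D2)\<bar> \<le> E * \<bar>b1 - b2\<bar>"
    using e2p e2E dD by (simp add: abs_mult) (intro mult_mono, auto)
  have "\<bar>e1 / D1 - e2 / D2\<bar> \<le> \<bar>b1 - b2\<bar> * x\<^sup>2 * E + E * \<bar>b1 - b2\<bar>"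
    unfolding split using t1 t2 abs_triangle_ineq[of "(e1 - e2) / D1" "e2 * (1/D1 - 1/D2)"] by linarith
  also have "\<dots> = \<bar>b1 - b2\<bar> * ((1 + x\<^sup>2) * E)" by (simp add: algebra_simps)
  finally show ?thesis unfolding e1_def e2_def A1_def A2_def D1_def D2_def E_def .
qed


theorem lemma3p8:
  fixes lam \<gamma> \<eta> b1 b2 :: real and h :: "real \<Rightarrow> real"
  assumes "lam > 0" and "\<gamma> > 0"
    and "real_analytic_on h {0..lam}"
    and "bounded (h ` {0..lam})"
    and "\<And>x. x \<in> {0..lam} \<Longrightarrow> 0 \<le> h x \<and> h x \<le> 1"
    and "\<eta> \<in> {0..lam}"
    and "b1 \<in> {0..<beta1 \<gamma>}" and "b2 \<in> {0..<beta1 \<gamma>}"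
  shows "integral {0..\<eta>} (\<lambda>x.
           \<bar>exp (-2 * integral {0..x} (\<lambda>\<xi>. \<xi> / (1 + b1 * h \<xi>))) / (1 + b1 * h x)
            - exp (-2 * integral {0..x} (\<lambda>\<xi>. \<xi> / (1 + b2 * h \<xi>))) / (1 + b2 * h x)\<bar>)
         \<le> 1 / (2 * \<gamma> * beta1 \<gamma>) * \<bar>b1 - b2\<bar>"
proof -
  define \<beta> where "\<beta> = beta1 \<gamma>"
  have bp: "\<beta> > 0" and beq: "sqrt pi / 2 * \<gamma> * \<beta> * sqrt (1 + \<beta>) * (3 + \<beta>) = 1"
    using beta1_prop[OF assms(2)] unfolding \<beta>_def by auto
  have b1: "0 \<le> b1" "b1 \<le> \<beta>" and b2: "0 \<le> b2" "b2 \<le> \<beta>" using assms(7,8) unfolding \<beta>_def by auto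
  have hc: "continuous_on {0..lam} h" by (rule analytic_cont[OF assms(3,1)])
  have eta: "0 \<le> \<eta>" "\<eta> \<le> lam" using assms(6) by auto
  define f where "f = (\<lambda>x.
           \<bar>exp (-2 * integral {0..x} (\<lambda>\<xi>. \<xi> / (1 + b1 * h \<xi>))) / (1 + b1 * h x)
            - exp (-2 * integral {0..x} (\<lambda>\<xi>. \<xi> / (1 + b2 * h \<xi>))) / (1 + b2 * h x)\<bar>)"
  define g where "g = (\<lambda>x::real. \<bar>b1 - b2\<bar> * ((1 + x\<^sup>2) * exp (- x\<^sup>2 / (1 + \<beta>))))"
  have fg: "f x \<le> g x" if x: "x \<in> {0..\<eta>}" for x
  proof -
    have sub: "{0..x} \<subseteq> {0..lam}" using x eta by auto
    show ?thesis unfolding f_def g_def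
      by (rule pointwise[OF continuous_on_subset[OF hc sub] _ _ b1 b2])
         (use sub assms(5) x in auto)
  qed
  have gi: "g integrable_on {0..\<eta>}" unfolding g_def using bp
    by (auto intro!: integrable_continuous_interval continuous_intros)
  have "integral {0..\<eta>} f \<le> integral {0..\<eta>} g"
  proof (cases "f integrable_on {0..\<eta>}")
    case True
    then show ?thesis using gi fg by (intro integral_le) auto
  next
    case False
    then have "integral {0..\<eta>} f = 0" by (rule not_integrable_integral)
    moreover have "0 \<le> integral {0..\<eta>} g" using gi by (intro integral_nonneg) (auto simp: g_def)
    ultimately show ?thesis by simp
  qed
  also have "integral {0..\<eta>} g = \<bar>b1 - b2\<bar> * integral {0..\<eta>} (\<lambda>x. (1 + x\<^sup>2) * exp (- x\<^sup>2 / (1 + \<beta>)))"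
    unfolding g_def by (rule integral_mult_right)
  also have "\<dots> \<le> \<bar>b1 - b2\<bar> * (sqrt (1 + \<beta>) * (sqrt pi/2 + (1 + \<beta>)*(sqrt pi/4)))"
    using gauss_scaled[of "1 + \<beta>" \<eta>] bp eta by (intro mult_left_mono) auto
  also have "sqrt (1 + \<beta>) * (sqrt pi/2 + (1 + \<beta>)*(sqrt pi/4)) = 1 / (2 * \<gamma> * \<beta>)"
  proof -
    have "sqrt (1 + \<beta>) * (sqrt pi/2 + (1 + \<beta>)*(sqrt pi/4)) * (2 * \<gamma> * \<beta>)
        = sqrt pi / 2 * \<gamma> * \<beta> * sqrt (1 + \<beta>) * (3 + \<beta>)" by (simp add: algebra_simps)
    also have "\<dots> = 1" by (rule beq)
    finally have "sqrt (1 + \<beta>) * (sqrt pi/2 + (1 + \<beta>)*(sqrt pi/4)) * (2 * \<gamma> * \<beta>) = 1" .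
    then show ?thesis using bp assms(2) by (simp add: field_simps)
  qed
  finally show ?thesis unfolding f_def \<beta>_def by (simp add: mult.commute)
qed

end
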